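(* Let $G=(V,E)$ be a graph on $n$ vertices with minimum degree $m$, where $m\to\infty$ as $n\to\infty$. For every $\varepsilon>0$ there exists a constant $k_\varepsilon$ such that if $k\geq k_\varepsilon$ then with high probability $G_k$ contains a path of length at least $(1-\varepsilon)m$.
   Context: For a fixed graph $G=(V,E)$ and a positive integer $k$, the random graph $G_k$ is obtained by letting each vertex $v\in V$ independently choose $k$ random neighbors of $v$ in $G$ (uniformly from its $G$-neighborhood), the edges of $G_k$ being all pairs $\{v,w\}$ such that $v$ chose $w$ or $w$ chose $v$. $G$ is one member of a sequence of graphs with $n\to\infty$; "with high probability" means with probability tending to $1$ as $n\to\infty$ (equivalently, as $m\to\infty$). *)

theory Defs
  imports "HOL-Probability.Probability"
begin

definition simple_graph :: "'a set \<Rightarrow> ('a \<Rightarrow> 'a \<Rightarrow> bool) \<Rightarrow> bool" where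
  "simple_graph V E \<longleftrightarrow> finite V \<and> (\<forall>v w. E v w \<longrightarrow> v \<in> V \<and> w \<in> V)
      \<and> (\<forall>v w. E v w \<longrightarrow> E w v) \<and> (\<forall>v. \<not> E v v)"

definition nbrs :: "'a set \<Rightarrow> ('a \<Rightarrow> 'a \<Rightarrow> bool) \<Rightarrow> 'a \<Rightarrow> 'a set" where
  "nbrs V E v = {w \<in> V. E v w}"

definition min_degree :: "'a set \<Rightarrow> ('a \<Rightarrow> 'a \<Rightarrow> bool) \<Rightarrow> nat" where
  "min_degree V E = Min ((\<lambda>v. card (nbrs V E v)) ` V)"

text \<open>Choice distribution of a single vertex: a uniformly random set of k
distinct neighbours (if the degree is below k, all neighbours are taken;
this never matters asymptotically since the minimum degree tends to infinity).\<close>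

definition choice_pmf :: "'a set \<Rightarrow> ('a \<Rightarrow> 'a \<Rightarrow> bool) \<Rightarrow> nat \<Rightarrow> 'a \<Rightarrow> 'a set pmf" where
  "choice_pmf V E k v =
     (if k \<le> card (nbrs V E v)
      then pmf_of_set {S. S \<subseteq> nbrs V E v \<and> card S = k}
      else return_pmf (nbrs V E v))"

definition choices_pmf :: "'a set \<Rightarrow> ('a \<Rightarrow> 'a \<Rightarrow> bool) \<Rightarrow> nat \<Rightarrow> ('a \<Rightarrow> 'a set) pmf" where
  "choices_pmf V E k = Pi_pmf V {} (choice_pmf V E k)"

definition Gk_edge :: "('a \<Rightarrow> 'a set) \<Rightarrow> 'a \<Rightarrow> 'a \<Rightarrow> bool" where
  "Gk_edge c v w \<longleftrightarrow> w \<in> c v \<or> v \<in> c w"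

definition is_path :: "('a \<Rightarrow> 'a \<Rightarrow> bool) \<Rightarrow> 'a list \<Rightarrow> bool" where
  "is_path F xs \<longleftrightarrow> xs \<noteq> [] \<and> distinct xs \<and> (\<forall>i. Suc i < length xs \<longrightarrow> F (xs ! i) (xs ! Suc i))"

definition has_path_of_length_ge :: "('a \<Rightarrow> 'a \<Rightarrow> bool) \<Rightarrow> real \<Rightarrow> bool" where
  "has_path_of_length_ge F L \<longleftrightarrow> (\<exists>xs. is_path F xs \<and> real (length xs - 1) \<ge> L)"

end

theory Submission
  imports Defs
begin


lemma binom_ratio:
  assumes "x \<le> y"
  shows "real (x choose r) * real y ^ r \<le> real (y choose r) * real x ^ r"
proof (induction r)
  case 0 then show ?case by simp
next
  case (Suc r)
  have ex: "real (Suc r) * real (x choose Suc r) = real (x - r) * real (x choose r)" for x :: nat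
  proof (cases "r \<le> x")
    case True
    have "Suc r * (x choose Suc r) = (x - r) * (x choose r)"
      using binomial_absorb_comp[of x r] binomial_absorption[of r x]
      by simp
    then show ?thesis by (metis of_nat_mult)
  next
    case False then show ?thesis by (simp add: binomial_eq_0)
  qed
  have key: "real (x - r) * real y \<le> real (y - r) * real x"
  proof (cases "r \<le> x")
    case True then have "r \<le> y" using assms by simp
    then show ?thesis using True assms by (simp add: of_nat_diff algebra_simps mult_left_mono)
  next
    case False then show ?thesis by simp
  qed
  have "real (Suc r) * (real (x choose Suc r) * real y ^ Suc r)
        = (real (Suc r) * real (x choose Suc r)) * real y ^ Suc r" by (simp only: mult.assoc)
  also have "\<dots> = (real (x - r) * real (x choose r)) * real y ^ Suc r" by (simp only: ex)
  also have "\<dots> = (real (x choose r) * real y ^ r) * (real (x - r) * real y)"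
    by (simp add: algebra_simps)
  also have "\<dots> \<le> (real (y choose r) * real x ^ r) * (real (x - r) * real y)"
    by (rule mult_right_mono[OF Suc.IH]) simp
  also have "\<dots> \<le> (real (y choose r) * real x ^ r) * (real (y - r) * real x)"
    by (rule mult_left_mono[OF key]) simp
  also have "\<dots> = (real (y - r) * real (y choose r)) * real x ^ Suc r"
    by (simp add: algebra_simps)
  also have "\<dots> = (real (Suc r) * real (y choose Suc r)) * real x ^ Suc r" by (simp only: ex)
  also have "\<dots> = real (Suc r) * (real (y choose Suc r) * real x ^ Suc r)" by (simp only: mult.assoc)
  finally show ?case by (simp add: mult_le_cancel_left_pos)
qed

lemma binom_bound:
  assumes "a \<le> k" "k \<le> d" "a \<le> w" "w \<le> d"
  shows "real (w - a choose (k - a)) * real d ^ k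
         \<le> real (d choose k) * real k ^ a * real w ^ (k - a)"
proof -
  define X where "X = real (w - a choose (k - a))"
  define Y where "Y = real (d - a choose (k - a))"
  define B1 where "B1 = real (k choose a)"
  have B1pos: "B1 > 0" unfolding B1_def using assms by simp
  have cm: "real (d choose k) * B1 = real (d choose a) * Y"
    unfolding B1_def Y_def using choose_mult[of a k d] assms by (metis of_nat_mult)
  have h1: "B1 * real d ^ a \<le> real (d choose a) * real k ^ a"
    unfolding B1_def using binom_ratio[of k d a] assms by simp
  have X0: "X \<ge> 0" "Y \<ge> 0" unfolding X_def Y_def by auto
  have h3: "X * real d ^ (k - a) \<le> Y * real w ^ (k - a)"
  proof (cases "d = a")
    case True then have "k - a = 0" using assms by simp
    then show ?thesis unfolding X_def Y_def by simp
  next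
    case False
    then have dpos: "real (d - a) > 0" using assms by simp
    have h2: "X * real (d - a) ^ (k - a) \<le> Y * real (w - a) ^ (k - a)"
      unfolding X_def Y_def using binom_ratio[of "w - a" "d - a" "k - a"] assms by simp
    have "real (w - a) * real d \<le> real w * real (d - a)"
    proof -
      have "real a * real w \<le> real a * real d" using assms by (intro mult_left_mono) auto
      then show ?thesis using assms by (simp add: of_nat_diff algebra_simps)
    qed
    then have pm: "(real (w - a) * real d) ^ (k - a) \<le> (real w * real (d - a)) ^ (k - a)"
      by (intro power_mono) auto
    have "(X * real d ^ (k - a)) * real (d - a) ^ (k - a)
          = (X * real (d - a) ^ (k - a)) * real d ^ (k - a)" by (simp add: algebra_simps)
    also have "\<dots> \<le> (Y * real (w - a) ^ (k - a)) * real d ^ (k - a)"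
      by (rule mult_right_mono[OF h2]) simp
    also have "\<dots> = Y * (real (w - a) * real d) ^ (k - a)" by (simp add: power_mult_distrib algebra_simps)
    also have "\<dots> \<le> Y * (real w * real (d - a)) ^ (k - a)"
      by (rule mult_left_mono[OF pm X0(2)])
    also have "\<dots> = (Y * real w ^ (k - a)) * real (d - a) ^ (k - a)"
      by (simp add: power_mult_distrib algebra_simps)
    finally show ?thesis using dpos by (simp add: mult_le_cancel_right_pos)
  qed
  have dk: "real d ^ k = real d ^ (k - a) * real d ^ a"
    using assms by (simp add: power_add[symmetric])
  have "(X * real d ^ k) * B1 = (X * real d ^ (k - a)) * (B1 * real d ^ a)"
    by (simp add: dk algebra_simps)
  also have "\<dots> \<le> (Y * real w ^ (k - a)) * (real (d choose a) * real k ^ a)"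
    by (rule mult_mono[OF h3 h1]) (use X0 B1pos in auto)
  also have "\<dots> = (real (d choose k) * real k ^ a * real w ^ (k - a)) * B1"
    using cm by (simp add: algebra_simps)
  finally show ?thesis unfolding X_def using B1pos by (simp add: mult_le_cancel_right_pos)
qed

lemma ksubset_prob:
  fixes N A X :: "'a set"
  assumes N: "finite N" and kN: "k \<le> card N"
  shows "measure_pmf.prob (pmf_of_set {S. S \<subseteq> N \<and> card S = k}) {S. A \<subseteq> S \<and> S \<subseteq> X}
         \<le> (real k / real (card N)) ^ card A * (real (card (X \<inter> N)) / real (card N)) ^ (k - card A)"
proof -
  define \<Omega> where "\<Omega> = {S. S \<subseteq> N \<and> card S = k}"
  define d where "d = card N"
  define W where "W = X \<inter> N"
  have fin\<Omega>: "finite \<Omega>" unfolding \<Omega>_def using N by auto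
  have card\<Omega>: "card \<Omega> = d choose k" unfolding \<Omega>_def d_def using n_subsets[OF N] by simp
  have cpos: "card \<Omega> > 0" using card\<Omega> kN d_def by simp
  then have ne: "\<Omega> \<noteq> {}" by auto
  have dpos: "d > 0 \<or> k = 0" using kN d_def by auto
  have rhs0: "0 \<le> (real k / real d) ^ card A * (real (card W) / real d) ^ (k - card A)" by simp
  have prob: "measure_pmf.prob (pmf_of_set \<Omega>) {S. A \<subseteq> S \<and> S \<subseteq> X}
      = real (card (\<Omega> \<inter> {S. A \<subseteq> S \<and> S \<subseteq> X})) / real (card \<Omega>)"
    by (rule measure_pmf_of_set[OF ne fin\<Omega>])
  show ?thesis
  proof (cases "finite A \<and> A \<subseteq> W \<and> card A \<le> k")
    case False
    have "\<Omega> \<inter> {S. A \<subseteq> S \<and> S \<subseteq> X} = {}"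
    proof (rule ccontr)
      assume "\<Omega> \<inter> {S. A \<subseteq> S \<and> S \<subseteq> X} \<noteq> {}"
      then obtain S where S: "S \<subseteq> N" "card S = k" "A \<subseteq> S" "S \<subseteq> X" unfolding \<Omega>_def by auto
      have fS: "finite S" using S N finite_subset by auto
      have "finite A" using fS S finite_subset by auto
      moreover have "A \<subseteq> W" using S unfolding W_def by auto
      moreover have "card A \<le> k" using S fS card_mono by metis
      ultimately show False using False by auto
    qed
    then show ?thesis using prob rhs0 unfolding \<Omega>_def W_def d_def by simp
  next
    case True
    then have fA: "finite A" and AW: "A \<subseteq> W" and ak: "card A \<le> k" by auto
    have fW: "finite W" unfolding W_def using N by auto
    have wd: "card W \<le> d" unfolding W_def d_def using N by (simp add: card_mono)
    have aw: "card A \<le> card W" using AW fW card_mono by auto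
    have eq: "\<Omega> \<inter> {S. A \<subseteq> S \<and> S \<subseteq> X} = (\<lambda>T. T \<union> A) ` {T. T \<subseteq> W - A \<and> card T = k - card A}"
    proof (intro equalityI subsetI)
      fix S assume "S \<in> \<Omega> \<inter> {S. A \<subseteq> S \<and> S \<subseteq> X}"
      then have S: "S \<subseteq> N" "card S = k" "A \<subseteq> S" "S \<subseteq> X" unfolding \<Omega>_def by auto
      have fS: "finite S" using S N finite_subset by auto
      have "S - A \<subseteq> W - A" using S unfolding W_def by auto
      moreover have "card (S - A) = k - card A" using S fS by (simp add: card_Diff_subset fA)
      moreover have "S = (S - A) \<union> A" using S by auto
      ultimately show "S \<in> (\<lambda>T. T \<union> A) ` {T. T \<subseteq> W - A \<and> card T = k - card A}" by blast
    next
      fix S assume "S \<in> (\<lambda>T. T \<union> A) ` {T. T \<subseteq> W - A \<and> card T = k - card A}"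
      then obtain T where T: "T \<subseteq> W - A" "card T = k - card A" "S = T \<union> A" by auto
      have fT: "finite T" using T fW finite_subset by auto
      have "card S = k" using T fT fA ak by (simp add: card_Un_disjoint Int_commute disjoint_iff)
        (metis Diff_iff card_Un_disjoint disjoint_iff le_add_diff_inverse2 subsetD)
      then show "S \<in> \<Omega> \<inter> {S. A \<subseteq> S \<and> S \<subseteq> X}" using T AW unfolding \<Omega>_def W_def by auto
    qed
    have inj: "inj_on (\<lambda>T. T \<union> A) {T. T \<subseteq> W - A \<and> card T = k - card A}"
      by (rule inj_onI) auto
    have cardE: "card (\<Omega> \<inter> {S. A \<subseteq> S \<and> S \<subseteq> X}) = (card W - card A) choose (k - card A)"
      unfolding eq card_image[OF inj] using n_subsets[of "W - A" "k - card A"] fW AW fA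
      by (simp add: card_Diff_subset)
    have bb: "real (card W - card A choose (k - card A)) * real d ^ k
         \<le> real (d choose k) * real k ^ card A * real (card W) ^ (k - card A)"
      by (rule binom_bound) (use ak kN aw wd d_def in auto)
    have dC: "real (d choose k) > 0" using cpos card\<Omega> by simp
    show ?thesis
    proof (cases "d = 0")
      case True then have "k = 0" using kN d_def by simp
      then show ?thesis using prob cardE card\<Omega> True ak unfolding \<Omega>_def W_def d_def by simp
    next
      case False
      have "real (card W - card A choose (k - card A)) / real (d choose k)
            \<le> real k ^ card A * real (card W) ^ (k - card A) / real d ^ k"
        using bb dC False by (simp add: field_simps)
      also have "\<dots> = (real k / real d) ^ card A * (real (card W) / real d) ^ (k - card A)"
        using ak by (simp add: power_divide power_add[symmetric])
      finally show ?thesis using prob cardE card\<Omega> unfolding \<Omega>_def W_def d_def by simp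
    qed
  qed
qed



definition Seqs :: "'a set \<Rightarrow> ('a \<Rightarrow> 'a set) \<Rightarrow> 'a \<Rightarrow> (nat \<Rightarrow> nat) \<Rightarrow> nat \<Rightarrow> 'a list set" where
  "Seqs V N v0 par n = {xs. set xs \<subseteq> V \<and> length xs = n \<and> xs ! 0 = v0 \<and>
       (\<forall>i\<in>{1..<n}. xs ! i \<in> N (xs ! par i))}"

lemma finite_Seqs: "finite V \<Longrightarrow> finite (Seqs V N v0 par n)"
  unfolding Seqs_def
  by (rule finite_subset[OF _ finite_lists_length_eq[of V n]]) auto

lemma Seqs_Suc:
  assumes "n \<ge> 1" "\<And>i. 1 \<le> i \<Longrightarrow> i \<le> n \<Longrightarrow> par i < i" "\<And>y. y \<in> V \<Longrightarrow> N y \<subseteq> V"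
  shows "Seqs V N v0 par (Suc n) = (\<lambda>(xs, x). xs @ [x]) ` Sigma (Seqs V N v0 par n) (\<lambda>xs. N (xs ! par n))"
proof (intro equalityI subsetI)
  fix ys assume ys: "ys \<in> Seqs V N v0 par (Suc n)"
  then have len: "length ys = Suc n" unfolding Seqs_def by auto
  define xs where "xs = butlast ys"
  define x where "x = last ys"
  have ysx: "ys = xs @ [x]" unfolding xs_def x_def using len
    by (metis append_butlast_last_id list.size(3) nat.distinct(1))
  have lxs: "length xs = n" using len ysx by simp
  have nth: "\<And>j. j < n \<Longrightarrow> ys ! j = xs ! j" using ysx lxs by (simp add: nth_append)
  have "xs \<in> Seqs V N v0 par n"
    unfolding Seqs_def
  proof (intro CollectI conjI ballI)
    show "set xs \<subseteq> V" using ys ysx unfolding Seqs_def by auto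
    show "length xs = n" by (rule lxs)
    show "xs ! 0 = v0" using ys nth[of 0] assms(1) unfolding Seqs_def by auto
    fix i assume i: "i \<in> {1..<n}"
    have "par i < n" using assms(2)[of i] i by auto
    moreover have "ys ! i \<in> N (ys ! par i)" using ys i unfolding Seqs_def by auto
    ultimately show "xs ! i \<in> N (xs ! par i)" using nth i by auto
  qed
  moreover have "x \<in> N (xs ! par n)"
  proof -
    have "ys ! n \<in> N (ys ! par n)" using ys assms(1) unfolding Seqs_def by auto
    then show ?thesis using ysx lxs assms(2)[of n] assms(1) by (simp add: nth_append)
  qed
  ultimately show "ys \<in> (\<lambda>(xs, x). xs @ [x]) ` Sigma (Seqs V N v0 par n) (\<lambda>xs. N (xs ! par n))"
    using ysx by auto
next
  fix ys assume "ys \<in> (\<lambda>(xs, x). xs @ [x]) ` Sigma (Seqs V N v0 par n) (\<lambda>xs. N (xs ! par n))"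
  then obtain xs x where xs: "xs \<in> Seqs V N v0 par n" and x: "x \<in> N (xs ! par n)" and ys: "ys = xs @ [x]"
    by auto
  have lxs: "length xs = n" and sV: "set xs \<subseteq> V" using xs unfolding Seqs_def by auto
  have "xs ! par n \<in> V" using sV lxs assms(2)[of n] assms(1) by auto
  then have xV: "x \<in> V" using x assms(3) by auto
  show "ys \<in> Seqs V N v0 par (Suc n)"
    unfolding Seqs_def
  proof (intro CollectI conjI ballI)
    show "set ys \<subseteq> V" using sV xV ys by auto
    show "length ys = Suc n" using ys lxs by simp
    show "ys ! 0 = v0" using ys lxs xs assms(1) unfolding Seqs_def by (simp add: nth_append)
    fix i assume i: "i \<in> {1..<Suc n}"
    show "ys ! i \<in> N (ys ! par i)"
    proof (cases "i = n")
      case True then show ?thesis using ys lxs x assms(2)[of n] assms(1) by (simp add: nth_append)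
    next
      case False
      then have "i < n" using i by auto
      moreover have "par i < n" using assms(2)[of i] i \<open>i < n\<close> by auto
      ultimately show ?thesis using xs ys lxs i unfolding Seqs_def by (auto simp: nth_append)
    qed
  qed
qed

lemma Seqs_one: "v0 \<in> V \<Longrightarrow> Seqs V N v0 par 1 = {[v0]}"
  unfolding Seqs_def by (auto simp: length_Suc_conv)

lemma seq_sum:
  assumes fin: "finite V" and v0: "v0 \<in> V"
    and par: "\<And>i. 1 \<le> i \<Longrightarrow> i < n \<Longrightarrow> par i < i"
    and NV: "\<And>y. y \<in> V \<Longrightarrow> N y \<subseteq> V \<and> finite (N y)"
    and fK: "\<And>y. y \<in> V \<Longrightarrow> f y * real (card (N y)) \<le> K"
    and f0: "\<And>y. f y \<ge> 0"
    and n: "n \<ge> 1"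
  shows "(\<Sum>xs\<in>Seqs V N v0 par n. \<Prod>i\<in>{1..<n}. f (xs ! par i)) \<le> K ^ (n - 1)"
  using n par
proof (induction n rule: nat_induct_at_least)
  case base
  then show ?case using Seqs_one[OF v0] by simp
next
  case (Suc n)
  have parn: "\<And>i. 1 \<le> i \<Longrightarrow> i \<le> n \<Longrightarrow> par i < i" using Suc.prems by auto
  have IH: "(\<Sum>xs\<in>Seqs V N v0 par n. \<Prod>i\<in>{1..<n}. f (xs ! par i)) \<le> K ^ (n - 1)"
    using Suc.IH Suc.prems by auto
  have K0: "K \<ge> 0" using fK[OF v0] f0[of v0] by (meson order.trans zero_le_mult_iff of_nat_0_le_iff)
  define A where "A = Seqs V N v0 par n"
  have fA: "finite A" unfolding A_def using finite_Seqs[OF fin] .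
  have inj: "inj_on (\<lambda>(xs, x). xs @ [x]) (Sigma A (\<lambda>xs. N (xs ! par n)))"
    by (rule inj_onI) auto
  have g: "(\<Prod>i\<in>{1..<Suc n}. f ((xs @ [x]) ! par i)) = (\<Prod>i\<in>{1..<n}. f (xs ! par i)) * f (xs ! par n)"
    if "xs \<in> A" for xs x
  proof -
    have lxs: "length xs = n" using that unfolding A_def Seqs_def by auto
    have "(\<Prod>i\<in>{1..<Suc n}. f ((xs @ [x]) ! par i)) = (\<Prod>i\<in>{1..<Suc n}. f (xs ! par i))"
    proof (rule prod.cong[OF refl])
      fix i assume "i \<in> {1..<Suc n}"
      then have "par i < n" using parn[of i] by auto
      then show "f ((xs @ [x]) ! par i) = f (xs ! par i)" using lxs by (simp add: nth_append)
    qed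
    also have "\<dots> = (\<Prod>i\<in>{1..<n}. f (xs ! par i)) * f (xs ! par n)"
      using Suc.hyps by (simp add: prod.atLeastLessThan_Suc)
    finally show ?thesis .
  qed
  have inV: "xs ! par n \<in> V" if "xs \<in> A" for xs
    using that parn[of n] Suc.hyps unfolding A_def Seqs_def by auto
  have SS: "Seqs V N v0 par (Suc n) = (\<lambda>(xs, x). xs @ [x]) ` Sigma A (\<lambda>xs. N (xs ! par n))"
    unfolding A_def by (rule Seqs_Suc) (use Suc.hyps parn NV in auto)
  have "(\<Sum>xs\<in>Seqs V N v0 par (Suc n). \<Prod>i\<in>{1..<Suc n}. f (xs ! par i))
      = (\<Sum>p\<in>Sigma A (\<lambda>xs. N (xs ! par n)). \<Prod>i\<in>{1..<Suc n}. f ((fst p @ [snd p]) ! par i))"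
    by (simp only: SS sum.reindex[OF inj] comp_def case_prod_beta)
  also have "\<dots> = (\<Sum>xs\<in>A. \<Sum>x\<in>N (xs ! par n). \<Prod>i\<in>{1..<Suc n}. f ((xs @ [x]) ! par i))"
    by (subst sum.Sigma) (use fA NV inV in \<open>auto simp: case_prod_beta\<close>)
  also have "\<dots> = (\<Sum>xs\<in>A. (\<Prod>i\<in>{1..<n}. f (xs ! par i)) * (f (xs ! par n) * real (card (N (xs ! par n)))))"
  proof (intro sum.cong refl)
    fix xs assume xs: "xs \<in> A"
    have "(\<Sum>x\<in>N (xs ! par n). \<Prod>i\<in>{1..<Suc n}. f ((xs @ [x]) ! par i))
        = (\<Sum>x\<in>N (xs ! par n). (\<Prod>i\<in>{1..<n}. f (xs ! par i)) * f (xs ! par n))"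
      by (intro sum.cong refl g xs)
    then show "(\<Sum>x\<in>N (xs ! par n). \<Prod>i\<in>{1..<Suc n}. f ((xs @ [x]) ! par i))
        = (\<Prod>i\<in>{1..<n}. f (xs ! par i)) * (f (xs ! par n) * real (card (N (xs ! par n))))"
      by (simp add: mult.commute mult.left_commute)
  qed
  also have "\<dots> \<le> (\<Sum>xs\<in>A. (\<Prod>i\<in>{1..<n}. f (xs ! par i)) * K)"
    by (intro sum_mono mult_left_mono fK inV) (auto intro: prod_nonneg f0)
  also have "\<dots> = K * (\<Sum>xs\<in>A. (\<Prod>i\<in>{1..<n}. f (xs ! par i)))"
    by (simp add: sum_distrib_left mult.commute)
  also have "\<dots> \<le> K * K ^ (n - 1)" using IH K0 unfolding A_def by (intro mult_left_mono) auto
  also have "\<dots> = K ^ (Suc n - 1)" using Suc.hyps by (cases n) auto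
  finally show ?case .
qed



type_synonym dst = "nat list \<times> nat \<times> nat set \<times> (nat \<Rightarrow> nat)"

definition dstep :: "dst \<Rightarrow> bool \<Rightarrow> dst" where
  "dstep st b = (case st of (stk, n, P, par) \<Rightarrow>
     if b then (n # stk, Suc n, P, par(n := hd stk)) else (tl stk, n, insert (hd stk) P, par))"

definition run :: "bool list \<Rightarrow> dst" where
  "run \<omega> = foldl dstep ([0], 1, {}, \<lambda>_. 0) \<omega>"

definition stk_of where "stk_of \<omega> = fst (run \<omega>)"
definition n_of where "n_of \<omega> = fst (snd (run \<omega>))"
definition P_of where "P_of \<omega> = fst (snd (snd (run \<omega>)))"
definition par_of where "par_of \<omega> = snd (snd (snd (run \<omega>)))"

lemma run_snoc: "run (\<omega> @ [b]) = dstep (run \<omega>) b"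
  by (simp add: run_def)

lemma of_Nil [simp]: "stk_of [] = [0]" "n_of [] = 1" "P_of [] = {}" "par_of [] = (\<lambda>_. 0)"
  by (simp_all add: stk_of_def n_of_def P_of_def par_of_def run_def)

lemma of_push [simp]:
  "stk_of (\<omega> @ [True]) = n_of \<omega> # stk_of \<omega>"
  "n_of (\<omega> @ [True]) = Suc (n_of \<omega>)"
  "P_of (\<omega> @ [True]) = P_of \<omega>"
  "par_of (\<omega> @ [True]) = (par_of \<omega>)(n_of \<omega> := hd (stk_of \<omega>))"
  by (simp_all add: stk_of_def n_of_def P_of_def par_of_def run_snoc dstep_def split: prod.splits)

lemma of_pop [simp]:
  "stk_of (\<omega> @ [False]) = tl (stk_of \<omega>)"
  "n_of (\<omega> @ [False]) = n_of \<omega>"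
  "P_of (\<omega> @ [False]) = insert (hd (stk_of \<omega>)) (P_of \<omega>)"
  "par_of (\<omega> @ [False]) = par_of \<omega>"
  by (simp_all add: stk_of_def n_of_def P_of_def par_of_def run_snoc dstep_def split: prod.splits)

definition good :: "'a set \<Rightarrow> ('a \<Rightarrow> 'a set) \<Rightarrow> 'a \<Rightarrow> bool list \<Rightarrow> 'a list \<Rightarrow> bool" where
  "good V c v0 \<omega> xs \<longleftrightarrow>
     (let stk = stk_of \<omega>; n = n_of \<omega>; P = P_of \<omega>; par = par_of \<omega> in
      length xs = n \<and> n \<ge> 1 \<and> xs ! 0 = v0 \<and> distinct xs \<and> set xs \<subseteq> V \<and>
      (\<forall>i\<in>{1..<n}. par i < i \<and> xs ! i \<in> c (xs ! par i)) \<and>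
      (\<forall>j\<in>P. c (xs ! j) \<subseteq> set xs) \<and>
      P \<inter> set stk = {} \<and> P \<union> set stk = {..<n} \<and> distinct stk \<and>
      (\<forall>j. Suc j < length stk \<longrightarrow> par (stk ! j) = stk ! Suc j) \<and>
      (stk \<noteq> [] \<longrightarrow> last stk = 0) \<and>
      length \<omega> + 1 = n + card P)"

lemma good_init: "v0 \<in> V \<Longrightarrow> good V c v0 [] [v0]"
  unfolding good_def by auto

lemma good_push:
  assumes g: "good V c v0 \<omega> xs" and ne: "stk_of \<omega> \<noteq> []"
    and w: "w \<in> c (xs ! hd (stk_of \<omega>))" "w \<notin> set xs" and wV: "w \<in> V"
  shows "good V c v0 (\<omega> @ [True]) (xs @ [w])"
proof -
  define stk n P par where "stk = stk_of \<omega>" "n = n_of \<omega>" "P = P_of \<omega>" "par = par_of \<omega>"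
  note defs = stk_n_P_par_def
  have G: "length xs = n" "n \<ge> 1" "xs ! 0 = v0" "distinct xs" "set xs \<subseteq> V"
      "\<forall>i\<in>{1..<n}. par i < i \<and> xs ! i \<in> c (xs ! par i)"
      "\<forall>j\<in>P. c (xs ! j) \<subseteq> set xs"
      "P \<inter> set stk = {}" "P \<union> set stk = {..<n}" "distinct stk"
      "\<forall>j. Suc j < length stk \<longrightarrow> par (stk ! j) = stk ! Suc j"
      "stk \<noteq> [] \<longrightarrow> last stk = 0" "length \<omega> + 1 = n + card P"
    using g unfolding good_def defs Let_def by auto
  have stk_lt: "\<forall>i\<in>set stk. i < n" using G(9) by auto
  have hd_lt: "hd stk < n" using stk_lt ne defs by auto
  have hd_in: "hd stk \<in> set stk" using ne defs by auto
  have nP: "n \<notin> P" using G(9) by auto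
  have nstk: "n \<notin> set stk" using stk_lt by auto
  have finP: "finite P" using G(9) by (metis finite_Un finite_lessThan)
  have nth1: "(xs @ [w]) ! i = xs ! i" if "i < n" for i using that G(1) by (simp add: nth_append)
  have nthn: "(xs @ [w]) ! n = w" by (metis G(1) nth_append_length)
  show ?thesis unfolding good_def Let_def of_push defs[symmetric]
  proof (intro conjI ballI allI impI)
    show "length (xs @ [w]) = Suc n" using G by simp
    show "1 \<le> Suc n" by simp
    show "(xs @ [w]) ! 0 = v0" using G nth1[of 0] by simp
    show "distinct (xs @ [w])" using G w by simp
    show "set (xs @ [w]) \<subseteq> V" using G wV by simp
  next
    fix i assume i: "i \<in> {1..<Suc n}"
    show "(par(n := hd stk)) i < i"
      using i G(6) hd_lt by (cases "i = n") auto
    show "(xs @ [w]) ! i \<in> c ((xs @ [w]) ! (par(n := hd stk)) i)"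
    proof (cases "i = n")
      case True then show ?thesis using nthn nth1[OF hd_lt] w defs by simp
    next
      case False
      then have i': "i \<in> {1..<n}" using i by auto
      then have "par i < i" using G(6) by auto
      then have "par i < n" using i' by auto
      then show ?thesis using G(6) i' False nth1 by auto
    qed
  next
    fix j assume "j \<in> P"
    then have "j < n" using G(9) by auto
    then have "(xs @ [w]) ! j = xs ! j" by (rule nth1)
    then show "c ((xs @ [w]) ! j) \<subseteq> set (xs @ [w])" using G(7) \<open>j \<in> P\<close> by auto
  next
    show "P \<inter> set (n # stk) = {}" using G(8) nP by auto
    show "P \<union> set (n # stk) = {..<Suc n}"
    proof -
      have "P \<union> set (n # stk) = insert n (P \<union> set stk)" by auto
      then show ?thesis using G(9) by (simp add: lessThan_Suc)
    qed
    show "distinct (n # stk)" using G(10) nstk by simp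
  next
    fix j assume j: "Suc j < length (n # stk)"
    show "(par(n := hd stk)) ((n # stk) ! j) = (n # stk) ! Suc j"
    proof (cases j)
      case 0 then show ?thesis using ne defs by (simp add: hd_conv_nth)
    next
      case (Suc j')
      then have "Suc j' < length stk" using j by simp
      moreover have "stk ! j' \<noteq> n" using nstk \<open>Suc j' < length stk\<close> by (metis Suc_lessD nth_mem)
      ultimately show ?thesis using G(11) Suc by simp
    qed
  next
    show "last (n # stk) = 0" using G(12) ne defs by simp
  next
    show "length (\<omega> @ [True]) + 1 = Suc n + card P" using G(13) by simp
  qed
qed

lemma good_facts:
  assumes "good V c v0 \<omega> xs"
  shows "length xs = n_of \<omega>" "n_of \<omega> \<ge> 1" "xs ! 0 = v0" "distinct xs" "set xs \<subseteq> V"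
      "\<forall>i\<in>{1..<n_of \<omega>}. par_of \<omega> i < i \<and> xs ! i \<in> c (xs ! par_of \<omega> i)"
      "\<forall>j\<in>P_of \<omega>. c (xs ! j) \<subseteq> set xs"
      "P_of \<omega> \<inter> set (stk_of \<omega>) = {}" "P_of \<omega> \<union> set (stk_of \<omega>) = {..<n_of \<omega>}" "distinct (stk_of \<omega>)"
      "\<forall>j. Suc j < length (stk_of \<omega>) \<longrightarrow> par_of \<omega> (stk_of \<omega> ! j) = stk_of \<omega> ! Suc j"
      "stk_of \<omega> \<noteq> [] \<longrightarrow> last (stk_of \<omega>) = 0" "length \<omega> + 1 = n_of \<omega> + card (P_of \<omega>)"
  using assms unfolding good_def Let_def by auto

lemma good_finP: "good V c v0 \<omega> xs \<Longrightarrow> finite (P_of \<omega>)"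
  using good_facts(9) by (metis finite_Un finite_lessThan)

lemma good_card: "good V c v0 \<omega> xs \<Longrightarrow> n_of \<omega> = card (P_of \<omega>) + length (stk_of \<omega>)"
proof -
  assume g: "good V c v0 \<omega> xs"
  have "card {..<n_of \<omega>} = card (P_of \<omega> \<union> set (stk_of \<omega>))" using good_facts(9)[OF g] by simp
  also have "\<dots> = card (P_of \<omega>) + card (set (stk_of \<omega>))"
    using good_facts(8)[OF g] good_finP[OF g] by (intro card_Un_disjoint) auto
  also have "\<dots> = card (P_of \<omega>) + length (stk_of \<omega>)" using good_facts(10)[OF g] distinct_card by metis
  finally show ?thesis by simp
qed

lemma good_pop:
  assumes g: "good V c v0 \<omega> xs" and ne: "stk_of \<omega> \<noteq> []"
    and cl: "c (xs ! hd (stk_of \<omega>)) \<subseteq> set xs"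
  shows "good V c v0 (\<omega> @ [False]) xs"
proof -
  define stk n P par where "stk = stk_of \<omega>" "n = n_of \<omega>" "P = P_of \<omega>" "par = par_of \<omega>"
  note defs = stk_n_P_par_def
  note G = good_facts[OF g, folded defs]
  have finP: "finite P" using good_finP[OF g] defs by simp
  have hd_in: "hd stk \<in> set stk" using ne defs by auto
  have hdP: "hd stk \<notin> P" using G(8) hd_in by auto
  have stk_eq: "stk = hd stk # tl stk" using ne defs by simp
  have hd_tl: "hd stk \<notin> set (tl stk)" using G(10) stk_eq by (metis distinct.simps(2))
  show ?thesis unfolding good_def Let_def of_pop defs[symmetric]
  proof (intro conjI ballI allI impI)
    show "length xs = n" "1 \<le> n" "xs ! 0 = v0" "distinct xs" "set xs \<subseteq> V" using G by auto
  next
    fix i assume "i \<in> {1..<n}"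
    then show "par i < i" "xs ! i \<in> c (xs ! par i)" using G(6) by auto
  next
    fix j assume "j \<in> insert (hd stk) P"
    then show "c (xs ! j) \<subseteq> set xs" using G(7) cl defs by auto
  next
    show "insert (hd stk) P \<inter> set (tl stk) = {}" using G(8) hd_tl stk_eq
      by (metis Int_insert_left_if0 disjoint_iff list.set_intros(2))
    show "insert (hd stk) P \<union> set (tl stk) = {..<n}"
    proof -
      have "set stk = insert (hd stk) (set (tl stk))" using stk_eq by (metis list.simps(15))
      then show ?thesis using G(9) by auto
    qed
    show "distinct (tl stk)" using G(10) by (simp add: distinct_tl)
  next
    fix j assume j: "Suc j < length (tl stk)"
    then show "par (tl stk ! j) = tl stk ! Suc j" using G(11) by (simp add: nth_tl)
  next
    assume "tl stk \<noteq> []"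
    then show "last (tl stk) = 0" using G(12) ne defs stk_eq by (metis last_ConsR)
  next
    show "length (\<omega> @ [False]) + 1 = n + card (insert (hd stk) P)"
      using G(13) finP hdP by simp
  qed
qed

lemma good_path:
  assumes g: "good V c v0 \<omega> xs" and ne: "stk_of \<omega> \<noteq> []"
  shows "is_path (Gk_edge c) (map ((!) xs) (stk_of \<omega>))"
proof -
  define stk n P par where "stk = stk_of \<omega>" "n = n_of \<omega>" "P = P_of \<omega>" "par = par_of \<omega>"
  note defs = stk_n_P_par_def
  note G = good_facts[OF g, folded defs]
  have lt: "\<forall>i\<in>set stk. i < n" using G(9) by auto
  show ?thesis unfolding is_path_def defs[symmetric]
  proof (intro conjI allI impI)
    show "map ((!) xs) stk \<noteq> []" using ne defs by simp
    have "inj_on ((!) xs) (set stk)"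
      using G(4) G(1) lt by (simp add: inj_on_def nth_eq_iff_index_eq)
    then show "distinct (map ((!) xs) stk)" using G(10) by (simp add: distinct_map)
  next
    fix j assume j: "Suc j < length (map ((!) xs) stk)"
    then have j': "Suc j < length stk" by simp
    have lastpos: "stk ! (length stk - 1) = 0" using G(12) ne defs by (simp add: last_conv_nth)
    have "stk ! j \<noteq> 0"
    proof
      assume "stk ! j = 0"
      then have "stk ! j = stk ! (length stk - 1)" using lastpos by simp
      then have "j = length stk - 1" using G(10) j' by (simp add: nth_eq_iff_index_eq)
      then show False using j' by simp
    qed
    moreover have "stk ! j < n" using lt j' by simp
    ultimately have "stk ! j \<in> {1..<n}" by auto
    then have "xs ! (stk ! j) \<in> c (xs ! par (stk ! j))" using G(6) by auto
    then have "xs ! (stk ! j) \<in> c (xs ! (stk ! Suc j))" using G(11) j' by simp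
    then show "Gk_edge c (map ((!) xs) stk ! j) (map ((!) xs) stk ! Suc j)"
      using j' by (simp add: Gk_edge_def)
  qed
qed

lemma dfs_exists:
  assumes g: "good V c v0 \<omega> xs" and fin: "finite V" and cV: "\<And>y. y \<in> V \<Longrightarrow> c y \<subseteq> V"
    and lt: "card (P_of \<omega>) < s" and ne: "stk_of \<omega> \<noteq> []"
  shows "\<exists>\<omega>' xs'. good V c v0 \<omega>' xs' \<and> card (P_of \<omega>') \<le> s \<and>
           (stk_of \<omega>' = [] \<or> card (P_of \<omega>') = s)"
  using g lt ne
proof (induction "2 * card V - length \<omega>" arbitrary: \<omega> xs rule: less_induct)
  case less
  note g = less.prems(1)
  note G = good_facts[OF g]
  have nV: "n_of \<omega> \<le> card V"
    using G(1) G(4) G(5) fin by (metis card_mono distinct_card)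
  have Pn: "card (P_of \<omega>) \<le> n_of \<omega>"
    using good_card[OF g] by simp
  have lenlt: "length \<omega> < 2 * card V" using G(13) nV Pn G(2) by linarith
  define y where "y = xs ! hd (stk_of \<omega>)"
  show ?case
  proof (cases "c y \<subseteq> set xs")
    case True
    have g': "good V c v0 (\<omega> @ [False]) xs" using good_pop[OF g less.prems(3)] True y_def by simp
    have cP: "card (P_of (\<omega> @ [False])) = Suc (card (P_of \<omega>))"
    proof -
      have "hd (stk_of \<omega>) \<in> set (stk_of \<omega>)" using less.prems(3) by simp
      then have "hd (stk_of \<omega>) \<notin> P_of \<omega>" using good_facts(8)[OF g] by auto
      then show ?thesis using good_finP[OF g] by simp
    qed
    show ?thesis
    proof (cases "stk_of (\<omega> @ [False]) = [] \<or> card (P_of (\<omega> @ [False])) = s")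
      case True then show ?thesis using g' cP less.prems(2) by (intro exI[of _ "\<omega> @ [False]"] exI[of _ xs]) auto
    next
      case False
      then show ?thesis
        using less.hyps[of "\<omega> @ [False]" xs] g' cP less.prems(2) lenlt by auto
    qed
  next
    case False
    then obtain w where w: "w \<in> c y" "w \<notin> set xs" by auto
    have hdV: "y \<in> V"
    proof -
      have "hd (stk_of \<omega>) \<in> set (stk_of \<omega>)" using less.prems(3) by simp
      then have "hd (stk_of \<omega>) < n_of \<omega>" using G(9) by auto
      then show ?thesis using G(1) G(5) y_def by auto
    qed
    have g': "good V c v0 (\<omega> @ [True]) (xs @ [w])"
      by (rule good_push[OF g less.prems(3)]) (use w y_def cV hdV in auto)
    show ?thesis
      using less.hyps[of "\<omega> @ [True]" "xs @ [w]"] g' less.prems(2) lenlt by auto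
  qed
qed



definition Rset :: "'a set \<Rightarrow> bool list \<Rightarrow> 'a list \<Rightarrow> ('a \<Rightarrow> 'a set) set" where
  "Rset V \<omega> xs = Pi V (\<lambda>y. {S. {xs ! i |i. i \<in> {1..<n_of \<omega>} \<and> xs ! par_of \<omega> i = y} \<subseteq> S \<and>
       (y \<in> (!) xs ` P_of \<omega> \<longrightarrow> S \<subseteq> set xs)})"

context
  fixes V :: "'a set" and E :: "'a \<Rightarrow> 'a \<Rightarrow> bool" and k :: nat
  assumes G: "simple_graph V E" and k1: "1 \<le> k" and km: "k \<le> min_degree V E"
begin

lemma finV: "finite V" using G unfolding simple_graph_def by auto

lemma nbrs_sub: "nbrs V E y \<subseteq> V" "finite (nbrs V E y)"
  using finV unfolding nbrs_def by auto

lemma deg_ge: "y \<in> V \<Longrightarrow> min_degree V E \<le> card (nbrs V E y)"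
  unfolding min_degree_def using finV by (intro Min_le) auto

lemma choice_eq: "y \<in> V \<Longrightarrow> choice_pmf V E k y = pmf_of_set {S. S \<subseteq> nbrs V E y \<and> card S = k}"
proof -
  assume y: "y \<in> V"
  have "k \<le> card (nbrs V E y)" using deg_ge[OF y] km by linarith
  then show ?thesis unfolding choice_pmf_def by simp
qed

lemma kset_ne: "y \<in> V \<Longrightarrow> {S. S \<subseteq> nbrs V E y \<and> card S = k} \<noteq> {} \<and> finite {S. S \<subseteq> nbrs V E y \<and> card S = k}"
proof -
  assume y: "y \<in> V"
  have "k \<le> card (nbrs V E y)" using deg_ge[OF y] km by simp
  then obtain S where "S \<subseteq> nbrs V E y" "card S = k" using obtain_subset_with_card_n by metis
  then show ?thesis using nbrs_sub by auto
qed

lemma supp: "c \<in> set_pmf (choices_pmf V E k) \<Longrightarrow> y \<in> V \<Longrightarrow> c y \<subseteq> nbrs V E y"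
proof -
  assume c: "c \<in> set_pmf (choices_pmf V E k)" and y: "y \<in> V"
  have "c \<in> PiE_dflt V {} (set_pmf \<circ> choice_pmf V E k)"
    using c set_Pi_pmf[OF finV, of "{}" "choice_pmf V E k"] unfolding choices_pmf_def by simp
  then have "c y \<in> set_pmf (choice_pmf V E k y)" using y unfolding PiE_dflt_def by auto
  then show ?thesis using choice_eq[OF y] kset_ne[OF y] by auto
qed

lemma prob_R:
  fixes \<omega> xs
  defines "n \<equiv> n_of \<omega>" and "P \<equiv> P_of \<omega>" and "par \<equiv> par_of \<omega>" and "m \<equiv> min_degree V E"
  assumes len: "length xs = n" and dist: "distinct xs" and sV: "set xs \<subseteq> V"
    and n1: "1 \<le> n" and nm: "n \<le> m" and par: "\<forall>i\<in>{1..<n}. par i < i" and Pn: "P \<subseteq> {..<n}"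
  shows "measure_pmf.prob (choices_pmf V E k) (Rset V \<omega> xs)
     \<le> (\<Prod>i\<in>{1..<n}. real k / real (card (nbrs V E (xs ! par i)))) *
        (real n / real m) ^ (k * card P - (n - 1))"
proof -
  define I where "I = {1..<n}"
  define h where "h i = xs ! par i" for i
  define cnt where "cnt y = card {i\<in>I. h i = y}" for y
  define popV where "popV = (!) xs ` P"
  define d where "d y = card (nbrs V E y)" for y
  define A where "A y = {xs ! i |i. i \<in> I \<and> h i = y}" for y
  define X where "X y = (if y \<in> popV then set xs else UNIV)" for y
  have finI: "finite I" unfolding I_def by simp
  have mpos: "m > 0" using k1 km m_def by simp
  have dm: "y \<in> V \<Longrightarrow> m \<le> d y" for y using deg_ge unfolding d_def m_def by simp
  have hV: "h i \<in> V" if "i \<in> I" for i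
  proof -
    have "par i < i" "i < n" using par that unfolding I_def by auto
    then have "par i < length xs" using len by simp
    then show ?thesis unfolding h_def using sV nth_mem by blast
  qed
  have injI: "inj_on ((!) xs) {..<n}" using dist len by (simp add: inj_on_def nth_eq_iff_index_eq)
  have cardA: "card (A y) = cnt y" for y
  proof -
    have "A y = (!) xs ` {i\<in>I. h i = y}" unfolding A_def by auto
    moreover have "inj_on ((!) xs) {i\<in>I. h i = y}" using injI unfolding I_def
      by (rule inj_on_subset) auto
    ultimately show ?thesis unfolding cnt_def by (simp add: card_image)
  qed
  have Rdef: "Rset V \<omega> xs = Pi V (\<lambda>y. {S. A y \<subseteq> S \<and> S \<subseteq> X y})"
  proof -
    have eq: "{S. {xs ! i |i. i \<in> {1..<n_of \<omega>} \<and> xs ! par_of \<omega> i = y} \<subseteq> S \<and>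
       (y \<in> (!) xs ` P_of \<omega> \<longrightarrow> S \<subseteq> set xs)} = {S. A y \<subseteq> S \<and> S \<subseteq> X y}" for y
      unfolding A_def X_def popV_def I_def h_def n_def P_def par_def by auto
    show ?thesis unfolding Rset_def by (simp only: eq)
  qed
  have step1: "measure_pmf.prob (choices_pmf V E k) (Rset V \<omega> xs)
      = (\<Prod>y\<in>V. measure_pmf.prob (choice_pmf V E k y) {S. A y \<subseteq> S \<and> S \<subseteq> X y})"
    unfolding Rdef choices_pmf_def by (rule measure_Pi_pmf_Pi[OF finV])
  define f1 where "f1 y = (real k / real (d y)) ^ cnt y" for y
  define f2 where "f2 y = (if y \<in> popV then (real n / real m) ^ (k - cnt y) else 1)" for y
  have per: "measure_pmf.prob (choice_pmf V E k y) {S. A y \<subseteq> S \<and> S \<subseteq> X y} \<le> f1 y * f2 y"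
    if y: "y \<in> V" for y
  proof -
    have dpos: "d y > 0" using dm[OF y] mpos by simp
    have "measure_pmf.prob (choice_pmf V E k y) {S. A y \<subseteq> S \<and> S \<subseteq> X y}
        \<le> (real k / real (d y)) ^ card (A y) * (real (card (X y \<inter> nbrs V E y)) / real (d y)) ^ (k - card (A y))"
      unfolding choice_eq[OF y] d_def
      by (rule ksubset_prob) (use nbrs_sub deg_ge[OF y] km in auto)
    also have "\<dots> \<le> f1 y * f2 y"
      unfolding f1_def cardA
    proof (intro mult_left_mono)
      show "(real (card (X y \<inter> nbrs V E y)) / real (d y)) ^ (k - cnt y) \<le> f2 y"
      proof (cases "y \<in> popV")
        case True
        have "card (set xs \<inter> nbrs V E y) \<le> card (set xs)" by (intro card_mono) auto
        also have "\<dots> = n" using dist len distinct_card by metis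
        finally have c1: "real (card (set xs \<inter> nbrs V E y)) \<le> real n" by simp
        have "real (card (set xs \<inter> nbrs V E y)) / real (d y) \<le> real n / real (d y)"
          using c1 dpos by (simp add: divide_right_mono)
        also have "\<dots> \<le> real n / real m" using dm[OF y] mpos
          by (intro divide_left_mono) auto
        finally have "real (card (set xs \<inter> nbrs V E y)) / real (d y) \<le> real n / real m" .
        then have "(real (card (set xs \<inter> nbrs V E y)) / real (d y)) ^ (k - cnt y) \<le> (real n / real m) ^ (k - cnt y)"
          by (intro power_mono) auto
        then show ?thesis unfolding f2_def X_def using True by simp
      next
        case False
        have "X y \<inter> nbrs V E y = nbrs V E y" unfolding X_def using False by simp
        then show ?thesis unfolding f2_def using False dpos d_def by simp
      qed
    qed simp
    finally show ?thesis .
  qed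
  have f0: "0 \<le> f1 y" "0 \<le> f2 y" for y unfolding f1_def f2_def by auto
  have "measure_pmf.prob (choices_pmf V E k) (Rset V \<omega> xs) \<le> (\<Prod>y\<in>V. f1 y * f2 y)"
    unfolding step1 by (intro prod_mono) (auto intro: per)
  also have "\<dots> = (\<Prod>y\<in>V. f1 y) * (\<Prod>y\<in>V. f2 y)" by (rule prod.distrib)
  also have "(\<Prod>y\<in>V. f1 y) = (\<Prod>i\<in>I. real k / real (d (h i)))"
  proof -
    have "(\<Prod>i\<in>I. real k / real (d (h i))) = (\<Prod>y\<in>h ` I. \<Prod>i\<in>{i\<in>I. h i = y}. real k / real (d (h i)))"
      by (rule prod.image_gen[OF finI])
    also have "\<dots> = (\<Prod>y\<in>h ` I. f1 y)"
      unfolding f1_def cnt_def by (intro prod.cong refl) simp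
    also have "\<dots> = (\<Prod>y\<in>V. f1 y)"
    proof (rule prod.mono_neutral_left[OF finV])
      show "h ` I \<subseteq> V" using hV by auto
      show "\<forall>y\<in>V - h ` I. f1 y = 1"
      proof
        fix y assume "y \<in> V - h ` I"
        then have e: "{i \<in> I. h i = y} = {}" by auto
        show "f1 y = 1" unfolding f1_def cnt_def by (simp only: e card.empty power_0)
      qed
    qed
    finally show ?thesis by simp
  qed
  also have "(\<Prod>y\<in>V. f2 y) \<le> (real n / real m) ^ (k * card P - (n - 1))"
  proof -
    have popVV: "popV \<subseteq> V" unfolding popV_def using Pn sV len by (auto intro!: subsetD[OF sV] nth_mem)
    have "(\<Prod>y\<in>V. f2 y) = (\<Prod>y\<in>popV. (real n / real m) ^ (k - cnt y))"
      unfolding f2_def using popVV finV by (simp add: prod.If_cases Int_absorb1)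
    also have "\<dots> = (real n / real m) ^ (\<Sum>y\<in>popV. k - cnt y)" by (simp add: power_sum)
    also have "\<dots> \<le> (real n / real m) ^ (k * card P - (n - 1))"
    proof (rule power_decreasing)
      have cardpop: "card popV = card P" unfolding popV_def
        using injI Pn by (intro card_image) (rule inj_on_subset)
      have sumcnt: "(\<Sum>y\<in>popV. cnt y) \<le> n - 1"
      proof -
        have "(\<Sum>y\<in>popV. cnt y) \<le> (\<Sum>y\<in>V. cnt y)"
          using popVV finV by (intro sum_mono2) auto
        also have "\<dots> = (\<Sum>y\<in>h ` I. cnt y)"
        proof (rule sum.mono_neutral_right[OF finV])
          show "h ` I \<subseteq> V" using hV by auto
          show "\<forall>y\<in>V - h ` I. cnt y = 0"
          proof
            fix y assume "y \<in> V - h ` I"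
            then have e: "{i \<in> I. h i = y} = {}" by auto
            show "cnt y = 0" unfolding cnt_def by (simp only: e card.empty)
          qed
        qed
        also have "\<dots> = card I"
          unfolding cnt_def using card_eq_sum[of I] sum.image_gen[OF finI, of "\<lambda>_. 1::nat" h] by simp
        also have "\<dots> = n - 1" unfolding I_def by simp
        finally show ?thesis .
      qed
      have "k * card P = (\<Sum>y\<in>popV. k)" using cardpop by simp
      also have "\<dots> \<le> (\<Sum>y\<in>popV. (k - cnt y) + cnt y)" by (intro sum_mono) auto
      also have "\<dots> = (\<Sum>y\<in>popV. k - cnt y) + (\<Sum>y\<in>popV. cnt y)" by (rule sum.distrib)
      finally show "k * card P - (n - 1) \<le> (\<Sum>y\<in>popV. k - cnt y)" using sumcnt by linarith
      show "0 \<le> real n / real m" by simp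
      show "real n / real m \<le> 1" using nm mpos by simp
    qed
    finally show ?thesis .
  qed
  finally show ?thesis
    unfolding I_def h_def d_def
    by (simp add: mult_left_mono prod_nonneg)
qed

end


lemma sum_pow2_le: "(\<Sum>i\<le>n. (2::nat) ^ i) \<le> 2 ^ Suc n"
  by (induction n) auto

lemma card_words_le: "card {\<omega>::bool list. length \<omega> \<le> L} \<le> 2 ^ Suc L"
proof -
  have "card {\<omega>::bool list. length \<omega> \<le> L} = card {\<omega>::bool list. set \<omega> \<subseteq> UNIV \<and> length \<omega> \<le> L}" by simp
  also have "\<dots> = (\<Sum>i\<le>L. card (UNIV::bool set) ^ i)" by (rule card_lists_length_le) simp
  also have "\<dots> \<le> 2 ^ Suc L" using sum_pow2_le by simp
  finally show ?thesis .
qed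

lemma card_words_eq: "card {\<omega>::bool list. length \<omega> = L} = 2 ^ L"
proof -
  have "card {\<omega>::bool list. length \<omega> = L} = card {\<omega>::bool list. set \<omega> \<subseteq> UNIV \<and> length \<omega> = L}" by simp
  also have "\<dots> = card (UNIV::bool set) ^ L" by (rule card_lists_length_eq) simp
  finally show ?thesis by simp
qed

lemma finite_words_eq: "finite {\<omega>::bool list. length \<omega> = L}"
  using finite_lists_length_eq[of "UNIV::bool set" L] by simp

lemma finite_words_le: "finite {\<omega>::bool list. length \<omega> \<le> L}"
  using finite_lists_length_le[of "UNIV::bool set" L] by simp

context
  fixes V :: "'a set" and E :: "'a \<Rightarrow> 'a \<Rightarrow> bool" and k :: nat
  assumes G: "simple_graph V E" and k1: "1 \<le> k" and km: "k \<le> min_degree V E"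
begin

lemma seqsum_bound:
  fixes \<omega>
  defines "n \<equiv> n_of \<omega>" and "P \<equiv> P_of \<omega>" and "par \<equiv> par_of \<omega>" and "m \<equiv> min_degree V E"
  assumes v0: "v0 \<in> V" and n1: "1 \<le> n" and nm: "n \<le> m" and par: "\<forall>i\<in>{1..<n}. par i < i" and Pn: "P \<subseteq> {..<n}"
  shows "(\<Sum>xs\<in>Seqs V (nbrs V E) v0 par n \<inter> {xs. distinct xs}. measure_pmf.prob (choices_pmf V E k) (Rset V \<omega> xs))
     \<le> real k ^ (n - 1) * (real n / real m) ^ (k * card P - (n - 1))"
proof -
  define Q where "Q = (real n / real m) ^ (k * card P - (n - 1))"
  have Q0: "Q \<ge> 0" unfolding Q_def by simp
  have fin: "finite (Seqs V (nbrs V E) v0 par n)" by (rule finite_Seqs[OF finV[OF G k1 km]])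
  have "(\<Sum>xs\<in>Seqs V (nbrs V E) v0 par n \<inter> {xs. distinct xs}. measure_pmf.prob (choices_pmf V E k) (Rset V \<omega> xs))
     \<le> (\<Sum>xs\<in>Seqs V (nbrs V E) v0 par n \<inter> {xs. distinct xs}. (\<Prod>i\<in>{1..<n}. real k / real (card (nbrs V E (xs ! par i)))) * Q)"
  proof (rule sum_mono)
    fix xs assume xs: "xs \<in> Seqs V (nbrs V E) v0 par n \<inter> {xs. distinct xs}"
    show "measure_pmf.prob (choices_pmf V E k) (Rset V \<omega> xs)
        \<le> (\<Prod>i\<in>{1..<n}. real k / real (card (nbrs V E (xs ! par i)))) * Q"
      unfolding Q_def n_def P_def par_def m_def
      by (rule prob_R[OF G k1 km]) (use xs n1 nm par Pn in \<open>auto simp: Seqs_def n_def P_def par_def m_def\<close>)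
  qed
  also have "\<dots> \<le> (\<Sum>xs\<in>Seqs V (nbrs V E) v0 par n. (\<Prod>i\<in>{1..<n}. real k / real (card (nbrs V E (xs ! par i)))) * Q)"
    by (rule sum_mono2[OF fin]) (auto intro!: mult_nonneg_nonneg prod_nonneg Q0)
  also have "\<dots> = (\<Sum>xs\<in>Seqs V (nbrs V E) v0 par n. (\<Prod>i\<in>{1..<n}. real k / real (card (nbrs V E (xs ! par i))))) * Q"
    by (simp add: sum_distrib_right)
  also have "\<dots> \<le> real k ^ (n - 1) * Q"
  proof (rule mult_right_mono[OF _ Q0])
    show "(\<Sum>xs\<in>Seqs V (nbrs V E) v0 par n. \<Prod>i\<in>{1..<n}. real k / real (card (nbrs V E (xs ! par i)))) \<le> real k ^ (n - 1)"
    proof (rule seq_sum[where f = "\<lambda>y. real k / real (card (nbrs V E y))"])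
      show "finite V" by (rule finV[OF G k1 km])
      show "v0 \<in> V" by (rule v0)
      show "\<And>i. 1 \<le> i \<Longrightarrow> i < n \<Longrightarrow> par i < i" using par by auto
      show "\<And>y. y \<in> V \<Longrightarrow> nbrs V E y \<subseteq> V \<and> finite (nbrs V E y)" using nbrs_sub[OF G k1 km] by auto
      show "\<And>y. y \<in> V \<Longrightarrow> real k / real (card (nbrs V E y)) * real (card (nbrs V E y)) \<le> real k"
      proof -
        fix y assume y: "y \<in> V"
        have "card (nbrs V E y) > 0" using deg_ge[OF G k1 km y] k1 km by linarith
        then show "real k / real (card (nbrs V E y)) * real (card (nbrs V E y)) \<le> real k" by simp
      qed
      show "\<And>y. 0 \<le> real k / real (card (nbrs V E y))" by simp
      show "1 \<le> n" by (rule n1)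
    qed
  qed
  finally show ?thesis unfolding Q_def .
qed

lemma fail_bound:
  fixes v0 :: 'a and s Lmax T :: nat and \<Lambda> :: real
  defines "m \<equiv> min_degree V E"
  assumes v0: "v0 \<in> V" and s1: "1 \<le> s" and TL: "T = s + Lmax" and Tm: "T \<le> m" and Lam: "\<Lambda> \<le> real Lmax"
  shows "measure_pmf.prob (choices_pmf V E k) {c. \<not> has_path_of_length_ge (Gk_edge c) \<Lambda>}
     \<le> 2 ^ Suc (2 * T) * real k ^ T * (real T / real m) ^ (k * s - T)
       + (\<Sum>n\<in>{1..s}. 2 ^ (2 * n - 1) * real k ^ (n - 1) * (real n / real m) ^ (k * n - (n - 1)))"
proof -
  define F :: "('a \<Rightarrow> 'a set) set" where "F = {c. \<not> has_path_of_length_ge (Gk_edge c) \<Lambda>}"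
  define pr where "pr = measure_pmf.prob (choices_pmf V E k)"
  define \<Omega> where "\<Omega> = set_pmf (choices_pmf V E k)"
  define Wb where "Wb = {\<omega>. length \<omega> \<le> 2 * T \<and> stk_of \<omega> \<noteq> [] \<and> card (P_of \<omega>) = s \<and> n_of \<omega> \<le> T \<and>
      1 \<le> n_of \<omega> \<and> (\<forall>i\<in>{1..<n_of \<omega>}. par_of \<omega> i < i) \<and> P_of \<omega> \<subseteq> {..<n_of \<omega>}}"
  define Wc where "Wc = {\<omega>. length \<omega> + 1 = 2 * n_of \<omega> \<and> stk_of \<omega> = [] \<and> card (P_of \<omega>) = n_of \<omega> \<and> n_of \<omega> \<le> s \<and>
      1 \<le> n_of \<omega> \<and> (\<forall>i\<in>{1..<n_of \<omega>}. par_of \<omega> i < i) \<and> P_of \<omega> \<subseteq> {..<n_of \<omega>}}"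
  define W where "W = Wb \<union> Wc"
  define S where "S \<omega> = Seqs V (nbrs V E) v0 (par_of \<omega>) (n_of \<omega>) \<inter> {xs. distinct xs}" for \<omega>
  define B where "B \<omega> = real k ^ (n_of \<omega> - 1) * (real (n_of \<omega>) / real m) ^ (k * card (P_of \<omega>) - (n_of \<omega> - 1))" for \<omega>
  have fV: "finite V" by (rule finV[OF G k1 km])
  have mpos: "0 < m" using k1 km m_def by simp
  have finWb: "finite Wb"
    by (rule finite_subset[OF _ finite_words_le[of "2 * T"]]) (auto simp: Wb_def)
  have finWc: "finite Wc"
    by (rule finite_subset[OF _ finite_words_le[of "2 * s"]]) (auto simp: Wc_def)
  have finW: "finite W" unfolding W_def using finWb finWc by simp
  have finS: "finite (S \<omega>)" for \<omega> unfolding S_def using finite_Seqs[OF fV] by simp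
  have cover: "F \<inter> \<Omega> \<subseteq> (\<Union>p\<in>Sigma W S. Rset V (fst p) (snd p))"
  proof
    fix c assume c: "c \<in> F \<inter> \<Omega>"
    have cN: "y \<in> V \<Longrightarrow> c y \<subseteq> nbrs V E y" for y using supp[OF G k1 km] c unfolding \<Omega>_def by auto
    have cV: "y \<in> V \<Longrightarrow> c y \<subseteq> V" for y using cN nbrs_sub[OF G k1 km] by blast
    have "\<exists>\<omega>' xs'. good V c v0 \<omega>' xs' \<and> card (P_of \<omega>') \<le> s \<and> (stk_of \<omega>' = [] \<or> card (P_of \<omega>') = s)"
      by (rule dfs_exists[OF good_init[OF v0] fV cV]) (use s1 in auto)
    then obtain \<omega> xs where g: "good V c v0 \<omega> xs" and Ps: "card (P_of \<omega>) \<le> s"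
        and trm: "stk_of \<omega> = [] \<or> card (P_of \<omega>) = s"
      by blast
    note Gf = good_facts[OF g]
    have nc: "n_of \<omega> = card (P_of \<omega>) + length (stk_of \<omega>)" by (rule good_card[OF g])
    have parV: "xs ! par_of \<omega> i \<in> V" if "i \<in> {1..<n_of \<omega>}" for i
    proof -
      have "par_of \<omega> i < i" using Gf(6) that by blast
      then have "par_of \<omega> i < n_of \<omega>" using that by auto
      then show ?thesis using Gf(1) Gf(5) by auto
    qed
    have xsS: "xs \<in> S \<omega>"
      unfolding S_def Seqs_def
    proof (intro IntI CollectI conjI ballI)
      fix i assume i: "i \<in> {1..<n_of \<omega>}"
      then show "xs ! i \<in> nbrs V E (xs ! par_of \<omega> i)" using Gf(6) cN[OF parV[OF i]] by auto
    qed (use Gf in auto)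
    have cR: "c \<in> Rset V \<omega> xs"
      unfolding Rset_def
    proof (intro Pi_I CollectI conjI impI subsetI)
      fix y x assume "y \<in> V" "x \<in> {xs ! i |i. i \<in> {1..<n_of \<omega>} \<and> xs ! par_of \<omega> i = y}"
      then show "x \<in> c y" using Gf(6) by auto
    next
      fix y x assume "y \<in> (!) xs ` P_of \<omega>" "x \<in> c y"
      then show "x \<in> set xs" using Gf(7) by auto
    qed
    have comm: "1 \<le> n_of \<omega> \<and> (\<forall>i\<in>{1..<n_of \<omega>}. par_of \<omega> i < i) \<and> P_of \<omega> \<subseteq> {..<n_of \<omega>}"
      using Gf(2) Gf(6) Gf(9) by auto
    have "\<omega> \<in> W"
    proof (cases "stk_of \<omega> = []")
      case True
      then show ?thesis using nc Ps Gf(13) comm unfolding W_def Wc_def by auto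
    next
      case False
      then have Pss: "card (P_of \<omega>) = s" using trm by simp
      have path: "is_path (Gk_edge c) (map ((!) xs) (stk_of \<omega>))" by (rule good_path[OF g False])
      have "c \<in> F" using c by simp
      then have "\<not> (real (length (map ((!) xs) (stk_of \<omega>)) - 1) \<ge> \<Lambda>)"
        unfolding F_def has_path_of_length_ge_def using path by blast
      then have "real (length (stk_of \<omega>) - 1) < real Lmax" using Lam by simp
      then have "length (stk_of \<omega>) \<le> Lmax" by linarith
      then have "n_of \<omega> \<le> T" using nc Pss TL by simp
      moreover have "length \<omega> \<le> 2 * T" using Gf(13) Pss \<open>n_of \<omega> \<le> T\<close> TL by linarith
      ultimately show ?thesis using False Pss comm unfolding W_def Wb_def by auto
    qed
    then have "(\<omega>, xs) \<in> Sigma W S" using xsS by blast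
    then show "c \<in> (\<Union>p\<in>Sigma W S. Rset V (fst p) (snd p))" using cR by (intro UN_I[of "(\<omega>, xs)"]) auto
  qed
  have "pr F = pr (F \<inter> \<Omega>)" unfolding pr_def \<Omega>_def by (simp add: measure_Int_set_pmf)
  also have "\<dots> \<le> pr (\<Union>p\<in>Sigma W S. Rset V (fst p) (snd p))"
    unfolding pr_def by (rule measure_pmf.finite_measure_mono[OF cover]) simp
  also have "\<dots> \<le> (\<Sum>p\<in>Sigma W S. pr (Rset V (fst p) (snd p)))"
    unfolding pr_def by (rule measure_pmf.finite_measure_subadditive_finite) (use finW finS in auto)
  also have "\<dots> = (\<Sum>\<omega>\<in>W. \<Sum>xs\<in>S \<omega>. pr (Rset V \<omega> xs))"
    by (subst sum.Sigma) (use finW finS in \<open>auto simp: case_prod_beta\<close>)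
  also have "\<dots> \<le> (\<Sum>\<omega>\<in>W. B \<omega>)"
  proof (rule sum_mono)
    fix \<omega> assume w: "\<omega> \<in> W"
    have nm: "n_of \<omega> \<le> m" using w Tm TL unfolding W_def Wb_def Wc_def by auto
    show "(\<Sum>xs\<in>S \<omega>. pr (Rset V \<omega> xs)) \<le> B \<omega>"
      unfolding S_def pr_def B_def m_def
      by (rule seqsum_bound[OF v0]) (use w nm in \<open>auto simp: W_def Wb_def Wc_def m_def\<close>)
  qed
  also have "\<dots> = (\<Sum>\<omega>\<in>Wb. B \<omega>) + (\<Sum>\<omega>\<in>Wc. B \<omega>)"
    unfolding W_def by (rule sum.union_disjoint[OF finWb finWc]) (auto simp: Wb_def Wc_def)
  also have "(\<Sum>\<omega>\<in>Wb. B \<omega>) \<le> 2 ^ Suc (2 * T) * real k ^ T * (real T / real m) ^ (k * s - T)"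
  proof -
    have "(\<Sum>\<omega>\<in>Wb. B \<omega>) \<le> (\<Sum>\<omega>\<in>Wb. real k ^ T * (real T / real m) ^ (k * s - T))"
    proof (rule sum_mono)
      fix \<omega> assume w: "\<omega> \<in> Wb"
      then have nT: "n_of \<omega> \<le> T" and Pss: "card (P_of \<omega>) = s" and n1: "1 \<le> n_of \<omega>" unfolding Wb_def by auto
      have a: "real k ^ (n_of \<omega> - 1) \<le> real k ^ T" using k1 nT by (intro power_increasing) auto
      have b1: "(real (n_of \<omega>) / real m) ^ (k * s - (n_of \<omega> - 1)) \<le> (real T / real m) ^ (k * s - (n_of \<omega> - 1))"
        using nT mpos by (intro power_mono divide_right_mono) auto
      have b2: "(real T / real m) ^ (k * s - (n_of \<omega> - 1)) \<le> (real T / real m) ^ (k * s - T)"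
        using nT Tm mpos by (intro power_decreasing) auto
      show "B \<omega> \<le> real k ^ T * (real T / real m) ^ (k * s - T)"
        unfolding B_def Pss using a b1 b2 by (intro mult_mono) auto
    qed
    also have "\<dots> = real (card Wb) * (real k ^ T * (real T / real m) ^ (k * s - T))" by simp
    also have "\<dots> \<le> 2 ^ Suc (2 * T) * (real k ^ T * (real T / real m) ^ (k * s - T))"
    proof (rule mult_right_mono)
      have "card Wb \<le> card {\<omega>::bool list. length \<omega> \<le> 2 * T}"
        by (rule card_mono[OF finite_words_le]) (auto simp: Wb_def)
      also have "\<dots> \<le> 2 ^ Suc (2 * T)" by (rule card_words_le)
      finally have "card Wb \<le> 2 ^ Suc (2 * T)" .
      then have "real (card Wb) \<le> real (2 ^ Suc (2 * T))" by (simp only: of_nat_le_iff)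
      then show "real (card Wb) \<le> 2 ^ Suc (2 * T)" by simp
    qed simp
    finally show ?thesis by (simp add: mult.assoc)
  qed
  also have "(\<Sum>\<omega>\<in>Wc. B \<omega>) \<le> (\<Sum>n\<in>{1..s}. 2 ^ (2 * n - 1) * real k ^ (n - 1) * (real n / real m) ^ (k * n - (n - 1)))"
  proof -
    have "(\<Sum>\<omega>\<in>Wc. B \<omega>) = (\<Sum>n\<in>{1..s}. \<Sum>\<omega>\<in>{\<omega>\<in>Wc. n_of \<omega> = n}. B \<omega>)"
      by (rule sum.group[symmetric, OF finWc]) (auto simp: Wc_def)
    also have "\<dots> \<le> (\<Sum>n\<in>{1..s}. 2 ^ (2 * n - 1) * real k ^ (n - 1) * (real n / real m) ^ (k * n - (n - 1)))"
    proof (rule sum_mono)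
      fix n assume n: "n \<in> {1..s}"
      have "(\<Sum>\<omega>\<in>{\<omega>\<in>Wc. n_of \<omega> = n}. B \<omega>)
          = (\<Sum>\<omega>\<in>{\<omega>\<in>Wc. n_of \<omega> = n}. real k ^ (n - 1) * (real n / real m) ^ (k * n - (n - 1)))"
        by (intro sum.cong refl) (auto simp: B_def Wc_def)
      also have "\<dots> = real (card {\<omega>\<in>Wc. n_of \<omega> = n}) * (real k ^ (n - 1) * (real n / real m) ^ (k * n - (n - 1)))"
        by simp
      also have "\<dots> \<le> 2 ^ (2 * n - 1) * (real k ^ (n - 1) * (real n / real m) ^ (k * n - (n - 1)))"
      proof (rule mult_right_mono)
        have "card {\<omega>\<in>Wc. n_of \<omega> = n} \<le> card {\<omega>::bool list. length \<omega> = 2 * n - 1}"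
          by (rule card_mono) (auto simp: Wc_def finite_words_eq)
        also have "\<dots> = 2 ^ (2 * n - 1)" by (rule card_words_eq)
        finally have "card {\<omega>\<in>Wc. n_of \<omega> = n} \<le> 2 ^ (2 * n - 1)" .
        then have "real (card {\<omega>\<in>Wc. n_of \<omega> = n}) \<le> real (2 ^ (2 * n - 1))" by (simp only: of_nat_le_iff)
        then show "real (card {\<omega>\<in>Wc. n_of \<omega> = n}) \<le> 2 ^ (2 * n - 1)" by simp
      qed simp
      finally show "(\<Sum>\<omega>\<in>{\<omega>\<in>Wc. n_of \<omega> = n}. B \<omega>) \<le> 2 ^ (2 * n - 1) * real k ^ (n - 1) * (real n / real m) ^ (k * n - (n - 1))"
        by (simp add: mult.assoc)
    qed
    finally show ?thesis .
  qed
  finally show ?thesis unfolding F_def pr_def by simp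
qed

end


lemma geom_half_sum: "(\<Sum>n\<in>{1..s::nat}. (1/2::real) ^ n) \<le> 1"
proof -
  have "(\<Sum>n\<in>{1..s::nat}. (1/2::real) ^ n) = 1 - (1/2) ^ s"
    by (induction s) (auto simp: power_Suc)
  then show ?thesis by simp
qed

lemma Bc_bound:
  fixes k m s :: nat
  assumes m: "0 < m" and sm: "2 * s \<le> m" and k1: "1 \<le> k" and k32: "32 * real k \<le> 2 ^ k"
  shows "(\<Sum>n\<in>{1..s}. 2 ^ (2 * n - 1) * real k ^ (n - 1) * (real n / real m) ^ (k * n - (n - 1))) \<le> 1 / real m"
proof -
  have trm: "2 ^ (2 * n - 1) * real k ^ (n - 1) * (real n / real m) ^ (k * n - (n - 1)) \<le> (1 / real m) * (1/2) ^ n"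
    if n: "n \<in> {1..s}" for n
  proof -
    have n1: "1 \<le> n" and ns: "n \<le> s" using n by auto
    define x where "x = real n / real m"
    have x0: "0 \<le> x" unfolding x_def by simp
    have xh: "x \<le> 1/2" unfolding x_def using ns sm m by (simp add: field_simps)
    have kn: "n \<le> k * n" using k1 by simp
    have e: "k * n - (n - 1) = (k - 1) * n + 1" using kn n1 by (simp add: diff_mult_distrib Suc_diff_le)
    have "x ^ (k * n - (n - 1)) = x * (x ^ (k - 1)) ^ n" unfolding e by (simp add: power_add power_mult[symmetric] mult.commute)
    also have "\<dots> \<le> x * ((1/2) ^ (k - 1)) ^ n"
      by (intro mult_left_mono power_mono) (use x0 xh in auto)
    finally have p: "x ^ (k * n - (n - 1)) \<le> x * ((1/2) ^ (k - 1)) ^ n" .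
    have xn: "x \<le> 2 ^ n / real m" unfolding x_def using m
      by (intro divide_right_mono) (use less_exp[of n] in \<open>auto simp: of_nat_less_numeral_power_cancel_iff\<close>)
    have a1: "(2::real) ^ (2 * n - 1) \<le> 4 ^ n"
    proof -
      have "(2::real) ^ (2 * n - 1) \<le> 2 ^ (2 * n)" by (intro power_increasing) auto
      also have "\<dots> = 4 ^ n" by (simp add: power_mult)
      finally show ?thesis .
    qed
    have a2: "real k ^ (n - 1) \<le> real k ^ n" using k1 by (intro power_increasing) auto
    have "2 ^ (2 * n - 1) * real k ^ (n - 1) * x ^ (k * n - (n - 1))
        \<le> 4 ^ n * real k ^ n * (2 ^ n / real m * ((1/2) ^ (k - 1)) ^ n)"
    proof (intro mult_mono a1 a2)
      have "x * ((1/2) ^ (k - 1)) ^ n \<le> 2 ^ n / real m * ((1 / 2) ^ (k - 1)) ^ n"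
        by (rule mult_right_mono[OF xn]) simp
      then show "x ^ (k * n - (n - 1)) \<le> 2 ^ n / real m * ((1 / 2) ^ (k - 1)) ^ n"
        using p by linarith
    qed (use x0 in auto)
    also have "\<dots> = (1 / real m) * (8 * real k * (1/2) ^ (k - 1)) ^ n"
    proof -
      have "(8 * real k * (1/2) ^ (k - 1)) ^ n = (4 * 2 * real k * (1/2) ^ (k - 1)) ^ n" by simp
      also have "\<dots> = (4::real) ^ n * 2 ^ n * real k ^ n * ((1/2) ^ (k - 1)) ^ n"
        by (simp only: power_mult_distrib)
      finally have e8: "(8 * real k * (1/2) ^ (k - 1)) ^ n = (4::real) ^ n * 2 ^ n * real k ^ n * ((1/2) ^ (k - 1)) ^ n" .
      show ?thesis unfolding e8 by (simp only: divide_inverse mult_ac mult_1_left)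
    qed
    also have "\<dots> \<le> (1 / real m) * (1/2) ^ n"
    proof -
      obtain k' where kk: "k = Suc k'" using k1 by (cases k) auto
      have "32 * real k \<le> 2 * 2 ^ k'" using k32 kk by simp
      then have h16: "16 * real k \<le> 2 ^ k'" by simp
      have pos: "(0::real) < 2 ^ k'" by simp
      have "8 * real k * (1/2) ^ (k - 1) = 8 * real k / 2 ^ k'" using kk by (simp add: power_one_over)
      also have "\<dots> \<le> 1/2" using h16 pos by (simp add: pos_divide_le_eq)
      finally have b: "8 * real k * (1/2) ^ (k - 1) \<le> 1/2" .
      have "(8 * real k * (1/2) ^ (k - 1)) ^ n \<le> (1/2) ^ n" by (rule power_mono[OF b]) simp
      then show ?thesis by (rule mult_left_mono) simp
    qed
    finally show ?thesis unfolding x_def .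
  qed
  have "(\<Sum>n\<in>{1..s}. 2 ^ (2 * n - 1) * real k ^ (n - 1) * (real n / real m) ^ (k * n - (n - 1)))
      \<le> (\<Sum>n\<in>{1..s}. (1 / real m) * (1/2) ^ n)" by (rule sum_mono[OF trm])
  also have "\<dots> = (1 / real m) * (\<Sum>n\<in>{1..s}. (1/2) ^ n)" by (simp add: sum_distrib_left)
  also have "\<dots> \<le> (1 / real m) * 1" by (intro mult_left_mono geom_half_sum) auto
  finally show ?thesis by simp
qed

lemma Bb_bound:
  fixes k m s T :: nat and \<epsilon> q :: real
  assumes m: "0 < m" and Tm: "T \<le> m" and Tq: "real T \<le> q * real m" and q0: "0 < q" and q1: "q < 1"
    and s: "\<epsilon> * real m / 4 \<le> real s" and k1: "1 \<le> k"
  shows "2 ^ Suc (2 * T) * real k ^ T * (real T / real m) ^ (k * s - T)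
         \<le> 2 * (4 * real k * q powr (real k * \<epsilon> / 4 - 1)) ^ m"
proof -
  define c where "c = real k * \<epsilon> / 4 - 1"
  have a: "2 ^ Suc (2 * T) * real k ^ T = 2 * (4 * real k) ^ T"
    by (simp add: power_mult power_mult_distrib)
  have a2: "(4 * real k) ^ T \<le> (4 * real k) ^ m" using k1 Tm by (intro power_increasing) auto
  have b1: "(real T / real m) ^ (k * s - T) \<le> q ^ (k * s - T)"
    using Tq m by (intro power_mono) (auto simp: field_simps)
  have b2: "q ^ (k * s - T) \<le> q ^ (k * s - m)"
    using Tm q0 q1 by (intro power_decreasing) auto
  have b3: "q ^ (k * s - m) \<le> q powr (c * real m)"
  proof -
    have "q ^ (k * s - m) = q powr real (k * s - m)" using q0 by (simp add: powr_realpow)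
    also have "\<dots> \<le> q powr (c * real m)"
    proof (rule powr_mono')
      have "real k * (\<epsilon> * real m / 4) \<le> real k * real s" using s by (intro mult_left_mono) auto
      then have "c * real m \<le> real (k * s) - real m" unfolding c_def by (simp add: algebra_simps)
      also have "\<dots> \<le> real (k * s - m)"
      proof (cases "m \<le> k * s")
        case True then show ?thesis by (simp add: of_nat_diff)
      next
        case False then have "k * s \<le> m" by simp
        then have "real (k * s) \<le> real m" by (simp only: of_nat_le_iff)
        then show ?thesis by simp
      qed
      finally show "c * real m \<le> real (k * s - m)" .
    qed (use q0 q1 in auto)
    finally show ?thesis .
  qed
  have b4: "q powr (c * real m) = (q powr c) ^ m"
    using q0 by (simp add: powr_powr[symmetric] powr_realpow)
  have "2 ^ Suc (2 * T) * real k ^ T * (real T / real m) ^ (k * s - T)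
        = 2 * (4 * real k) ^ T * (real T / real m) ^ (k * s - T)" using a by simp
  also have "\<dots> \<le> 2 * (4 * real k) ^ m * (q powr c) ^ m"
  proof -
    have "(real T / real m) ^ (k * s - T) \<le> (q powr c) ^ m" using b1 b2 b3 b4 by linarith
    then show ?thesis using a2 by (intro mult_mono) auto
  qed
  also have "\<dots> = 2 * (4 * real k * q powr c) ^ m" by (simp add: power_mult_distrib)
  finally show ?thesis unfolding c_def .
qed

lemma fixed_graph_bound:
  fixes V :: "'a set" and E :: "'a \<Rightarrow> 'a \<Rightarrow> bool" and k :: nat and \<epsilon> :: real
  defines "m \<equiv> min_degree V E" and "q \<equiv> 1 - \<epsilon> / 2"
  assumes G: "simple_graph V E" and ne: "V \<noteq> {}" and e0: "0 < \<epsilon>" and e1: "\<epsilon> < 1"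
    and k1: "1 \<le> k" and k32: "32 * real k \<le> 2 ^ k"
    and rho: "4 * real k * q powr (real k * \<epsilon> / 4 - 1) \<le> 1/2"
    and km: "k \<le> m" and m8: "8 \<le> \<epsilon> * real m"
  shows "measure_pmf.prob (choices_pmf V E k) {c. \<not> has_path_of_length_ge (Gk_edge c) ((1 - \<epsilon>) * real m)}
         \<le> 2 * (1/2) ^ m + 1 / real m"
proof -
  obtain v0 where v0: "v0 \<in> V" using ne by auto
  define x where "x = \<epsilon> * real m / 4"
  define s where "s = nat \<lfloor>x\<rfloor> + 1"
  define Lmax where "Lmax = nat \<lceil>(1 - \<epsilon>) * real m\<rceil>"
  define T where "T = s + Lmax"
  have x2: "2 \<le> x" unfolding x_def using m8 by simp
  have fl: "of_int \<lfloor>x\<rfloor> \<le> x" "x < of_int \<lfloor>x\<rfloor> + 1" using floor_correct[of x] by auto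
  have fl0: "0 \<le> \<lfloor>x\<rfloor>" using x2 by simp
  have rs: "real s = of_int \<lfloor>x\<rfloor> + 1" unfolding s_def using fl0 by simp
  have s_lo: "x \<le> real s" and s_hi: "real s \<le> x + 1" using rs fl by auto
  have mpos: "0 < m" using km k1 by simp
  have c0: "0 \<le> (1 - \<epsilon>) * real m" using e1 by simp
  have cl: "(1 - \<epsilon>) * real m \<le> of_int \<lceil>(1 - \<epsilon>) * real m\<rceil>" "of_int \<lceil>(1 - \<epsilon>) * real m\<rceil> < (1 - \<epsilon>) * real m + 1"
    using ceiling_correct[of "(1 - \<epsilon>) * real m"] by auto
  have cl0: "0 \<le> \<lceil>(1 - \<epsilon>) * real m\<rceil>" using c0 by simp
  have rL: "real Lmax = of_int \<lceil>(1 - \<epsilon>) * real m\<rceil>" unfolding Lmax_def using cl0 by simp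
  have L_lo: "(1 - \<epsilon>) * real m \<le> real Lmax" and L_hi: "real Lmax \<le> (1 - \<epsilon>) * real m + 1"
    using rL cl by auto
  have Tq: "real T \<le> q * real m"
  proof -
    have "real T = real s + real Lmax" unfolding T_def by simp
    also have "\<dots> \<le> (x + 1) + ((1 - \<epsilon>) * real m + 1)" using s_hi L_hi by linarith
    also have "\<dots> \<le> q * real m" unfolding q_def x_def using x2 unfolding x_def by (simp add: algebra_simps)
    finally show ?thesis .
  qed
  have q0: "0 < q" and q1: "q < 1" unfolding q_def using e0 e1 by auto
  have Tm: "T \<le> m"
  proof -
    have "real T \<le> real m" using Tq q1 mpos by (smt (verit) mult_le_cancel_right2 of_nat_0_le_iff)
    then show ?thesis by simp
  qed
  have sm: "2 * s \<le> m"
  proof -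
    have "real s \<le> real m / 4 + 1" using s_hi e1 unfolding x_def by (smt (verit) divide_right_mono mult_le_cancel_right2 of_nat_0_le_iff)
    moreover have "4 \<le> real m" using m8 e1 by (smt (verit) mult_le_cancel_right2 of_nat_0_le_iff)
    ultimately have "real (2 * s) \<le> real m" by simp
    then show ?thesis by (simp only: of_nat_le_iff)
  qed
  have s1: "1 \<le> s" unfolding s_def by simp
  have main: "measure_pmf.prob (choices_pmf V E k) {c. \<not> has_path_of_length_ge (Gk_edge c) ((1 - \<epsilon>) * real m)}
     \<le> 2 ^ Suc (2 * T) * real k ^ T * (real T / real m) ^ (k * s - T)
       + (\<Sum>n\<in>{1..s}. 2 ^ (2 * n - 1) * real k ^ (n - 1) * (real n / real m) ^ (k * n - (n - 1)))"
    unfolding m_def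
    by (rule fail_bound[OF G k1 km[unfolded m_def] v0 s1 T_def Tm[unfolded m_def] L_lo[unfolded m_def]])
  have B1: "2 ^ Suc (2 * T) * real k ^ T * (real T / real m) ^ (k * s - T)
         \<le> 2 * (4 * real k * q powr (real k * \<epsilon> / 4 - 1)) ^ m"
    by (rule Bb_bound[OF mpos Tm Tq q0 q1 _ k1]) (use s_lo x_def in simp)
  have B1': "2 * (4 * real k * q powr (real k * \<epsilon> / 4 - 1)) ^ m \<le> 2 * (1/2) ^ m"
    using rho by (intro mult_left_mono power_mono) auto
  have B2: "(\<Sum>n\<in>{1..s}. 2 ^ (2 * n - 1) * real k ^ (n - 1) * (real n / real m) ^ (k * n - (n - 1))) \<le> 1 / real m"
    by (rule Bc_bound[OF mpos sm k1 k32])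
  show ?thesis using main B1 B1' B2 by linarith
qed



theorem theorem3:
  fixes V :: "nat \<Rightarrow> 'a set" and E :: "nat \<Rightarrow> 'a \<Rightarrow> 'a \<Rightarrow> bool"
  assumes graphs: "\<And>j. simple_graph (V j) (E j)"
    and nonempty: "\<And>j. V j \<noteq> {}"
    and n_inf: "filterlim (\<lambda>j. card (V j)) at_top sequentially"
    and m_inf: "filterlim (\<lambda>j. min_degree (V j) (E j)) at_top sequentially"
  shows "\<forall>\<epsilon>>0. \<exists>k\<^sub>\<epsilon>. \<forall>k\<ge>k\<^sub>\<epsilon>.
           (\<lambda>j. measure_pmf.prob (choices_pmf (V j) (E j) k)
                  {c. has_path_of_length_ge (Gk_edge c) ((1 - \<epsilon>) * real (min_degree (V j) (E j)))})
           \<longlonglongrightarrow> 1"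
proof (intro allI impI)
  fix \<epsilon> :: real assume e0: "\<epsilon> > 0"
  define md where "md j = min_degree (V j) (E j)" for j
  show "\<exists>k\<^sub>\<epsilon>. \<forall>k\<ge>k\<^sub>\<epsilon>.
           (\<lambda>j. measure_pmf.prob (choices_pmf (V j) (E j) k)
                  {c. has_path_of_length_ge (Gk_edge c) ((1 - \<epsilon>) * real (min_degree (V j) (E j)))})
           \<longlonglongrightarrow> 1"
  proof (cases "\<epsilon> \<ge> 1")
    case True
    have all: "{c. has_path_of_length_ge (Gk_edge c) ((1 - \<epsilon>) * real (min_degree (V j) (E j)))} = UNIV" for j
    proof -
      have "has_path_of_length_ge (Gk_edge c) ((1 - \<epsilon>) * real (min_degree (V j) (E j)))" for c
      proof -
        have "is_path (Gk_edge c) [undefined]" unfolding is_path_def by simp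
        moreover have "(1 - \<epsilon>) * real (min_degree (V j) (E j)) \<le> real (length [undefined] - 1)"
          using True by (simp add: mult_nonpos_nonneg)
        ultimately show ?thesis unfolding has_path_of_length_ge_def by blast
      qed
      then show ?thesis by auto
    qed
    show ?thesis by (intro exI[of _ 0] allI impI) (simp add: all)
  next
    case False
    then have e1: "\<epsilon> < 1" by simp
    define q where "q = 1 - \<epsilon> / 2"
    have q0: "0 < q" and q1: "q < 1" unfolding q_def using e0 e1 by auto
    define a where "a = q powr (\<epsilon> / 4)"
    have a0: "0 < a" unfolding a_def using q0 by simp
    have a1: "a < 1"
    proof -
      have "q powr (\<epsilon> / 4) < 1 powr (\<epsilon> / 4)" using q0 q1 e0 by (intro powr_less_mono2) auto
      then show ?thesis unfolding a_def by simp
    qed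
    have "(\<lambda>n. of_nat n * a ^ n) \<longlonglongrightarrow> 0" by (rule powser_times_n_limit_0) (use a0 a1 in simp)
    then have "eventually (\<lambda>n. real n * a ^ n < q / 8) sequentially"
      using q0 by (intro order_tendstoD) auto
    then obtain K1 where K1: "\<And>n. n \<ge> K1 \<Longrightarrow> real n * a ^ n < q / 8"
      unfolding eventually_sequentially by blast
    have "(\<lambda>n. of_nat n * (1/2::real) ^ n) \<longlonglongrightarrow> 0" by (rule powser_times_n_limit_0) simp
    then have "eventually (\<lambda>n. real n * (1/2::real) ^ n < 1/32) sequentially"
      by (intro order_tendstoD) auto
    then obtain K2 where K2: "\<And>n. n \<ge> K2 \<Longrightarrow> real n * (1/2::real) ^ n < 1/32"
      unfolding eventually_sequentially by blast
    show ?thesis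
    proof (intro exI[of _ "max 1 (max K1 K2)"] allI impI)
      fix k :: nat assume kk: "max 1 (max K1 K2) \<le> k"
      have k1: "1 \<le> k" using kk by simp
      have k32: "32 * real k \<le> 2 ^ k"
      proof -
        have "real k * (1/2::real) ^ k < 1/32" using K2 kk by simp
        then have "real k / 2 ^ k < 1/32" by (simp add: power_one_over)
        then show ?thesis by (simp add: field_simps)
      qed
      have rho: "4 * real k * q powr (real k * \<epsilon> / 4 - 1) \<le> 1/2"
      proof -
        have "q powr (real k * \<epsilon> / 4 - 1) = q powr (real k * \<epsilon> / 4) / q"
          using q0 by (simp add: powr_diff)
        also have "q powr (real k * \<epsilon> / 4) = a ^ k"
        proof -
          have "q powr (real k * \<epsilon> / 4) = (q powr (\<epsilon> / 4)) powr real k"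
            by (simp add: powr_powr mult.commute)
          also have "\<dots> = a ^ k" unfolding a_def using q0 by (simp add: powr_realpow)
          finally show ?thesis .
        qed
        finally have eq: "4 * real k * q powr (real k * \<epsilon> / 4 - 1) = (4 / q) * (real k * a ^ k)" by simp
        have "real k * a ^ k < q / 8" using K1 kk by simp
        then have "(4 / q) * (real k * a ^ k) \<le> (4 / q) * (q / 8)"
          using q0 by (intro mult_left_mono) auto
        also have "\<dots> = 1/2" using q0 by simp
        finally show ?thesis using eq by simp
      qed
      define f where "f j = measure_pmf.prob (choices_pmf (V j) (E j) k)
                  {c. has_path_of_length_ge (Gk_edge c) ((1 - \<epsilon>) * real (md j))}" for j
      define l where "l j = 1 - (2 * (1/2) ^ md j + inverse (real (md j)))" for j
      have ev: "eventually (\<lambda>j. nat \<lceil>8 / \<epsilon>\<rceil> + k \<le> md j) sequentially"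
        using m_inf unfolding md_def filterlim_at_top by auto
      have lower: "eventually (\<lambda>j. l j \<le> f j) sequentially"
      proof (rule eventually_mono[OF ev])
        fix j assume j: "nat \<lceil>8 / \<epsilon>\<rceil> + k \<le> md j"
        have km: "k \<le> min_degree (V j) (E j)" using j unfolding md_def by simp
        have m8: "8 \<le> \<epsilon> * real (min_degree (V j) (E j))"
        proof -
          have "nat \<lceil>8 / \<epsilon>\<rceil> \<le> md j" using j by linarith
          then have "real (nat \<lceil>8 / \<epsilon>\<rceil>) \<le> real (md j)" by (simp only: of_nat_le_iff)
          then have "8 / \<epsilon> \<le> real (md j)" using real_nat_ceiling_ge[of "8 / \<epsilon>"] by linarith
          then show ?thesis unfolding md_def using e0 by (simp add: field_simps)
        qed
        have fb: "measure_pmf.prob (choices_pmf (V j) (E j) k)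
              {c. \<not> has_path_of_length_ge (Gk_edge c) ((1 - \<epsilon>) * real (min_degree (V j) (E j)))}
           \<le> 2 * (1/2) ^ min_degree (V j) (E j) + 1 / real (min_degree (V j) (E j))"
          by (rule fixed_graph_bound[OF graphs nonempty e0 e1 k1 k32 rho[unfolded q_def] km m8])
        have "f j = 1 - measure_pmf.prob (choices_pmf (V j) (E j) k)
              {c. \<not> has_path_of_length_ge (Gk_edge c) ((1 - \<epsilon>) * real (min_degree (V j) (E j)))}"
        proof -
          have "{c. has_path_of_length_ge (Gk_edge c) ((1 - \<epsilon>) * real (md j))}
              = space (measure_pmf (choices_pmf (V j) (E j) k)) -
                {c. \<not> has_path_of_length_ge (Gk_edge c) ((1 - \<epsilon>) * real (md j))}" by auto
          moreover have "measure_pmf.prob (choices_pmf (V j) (E j) k) (space (measure_pmf (choices_pmf (V j) (E j) k)) -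
                {c. \<not> has_path_of_length_ge (Gk_edge c) ((1 - \<epsilon>) * real (md j))})
              = 1 - measure_pmf.prob (choices_pmf (V j) (E j) k) {c. \<not> has_path_of_length_ge (Gk_edge c) ((1 - \<epsilon>) * real (md j))}"
            by (rule measure_pmf.prob_compl) simp
          ultimately show ?thesis unfolding f_def md_def by (simp only:)
        qed
        then show "l j \<le> f j" using fb unfolding l_def md_def by (simp only: divide_inverse mult_1_left)
      qed
      have upper: "eventually (\<lambda>j. f j \<le> 1) sequentially"
        unfolding f_def by (intro always_eventually allI measure_pmf.prob_le_1)
      have lim_l: "l \<longlonglongrightarrow> 1"
      proof -
        have t1: "(\<lambda>j. (1/2::real) ^ md j) \<longlonglongrightarrow> 0"
          using filterlim_compose[OF LIMSEQ_realpow_zero[of "1/2::real"] m_inf[folded md_def]] by simp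
        have "filterlim (\<lambda>j. real (md j)) at_top sequentially"
          using filterlim_compose[OF filterlim_real_sequentially m_inf[folded md_def]] by simp
        then have t2: "(\<lambda>j. inverse (real (md j))) \<longlonglongrightarrow> 0" by (rule tendsto_inverse_0_at_top)
        have "(\<lambda>j. 2 * (1/2::real) ^ md j) \<longlonglongrightarrow> 2 * 0" by (rule tendsto_mult[OF tendsto_const t1])
        then have "(\<lambda>j. 2 * (1/2::real) ^ md j + inverse (real (md j))) \<longlonglongrightarrow> 2 * 0 + 0" by (rule tendsto_add[OF _ t2])
        then have "(\<lambda>j. 1 - (2 * (1/2) ^ md j + inverse (real (md j)))) \<longlonglongrightarrow> 1 - (2 * 0 + 0)"
          by (rule tendsto_diff[OF tendsto_const])
        then show ?thesis unfolding l_def by simp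
      qed
      have "f \<longlonglongrightarrow> 1" by (rule tendsto_sandwich[OF lower upper lim_l tendsto_const])
      then show "(\<lambda>j. measure_pmf.prob (choices_pmf (V j) (E j) k)
                  {c. has_path_of_length_ge (Gk_edge c) ((1 - \<epsilon>) * real (min_degree (V j) (E j)))})
           \<longlonglongrightarrow> 1" unfolding f_def md_def .
    qed
  qed
qed


end
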